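(* Let $n\ge 2$ and let $R$ be the complex Leibniz algebra with basis $\{h,e_1,\dots,e_n\}$ and nonzero products $[e_i,e_1]=e_{i+1}$ ($1\le i\le n-1$), $[h,e_1]=-e_1$, $[e_i,h]=ie_i$ ($1\le i\le n$). Then every biderivation of $R$ is inner, i.e. of the form $(-\mathrm{ad}_x,\mathrm{Ad}_x)$ for some $x\in R$.
   Context: Leibniz algebras are right Leibniz over $\mathbb C$: $[x,[y,z]]=[[x,y],z]-[[x,z],y]$. Unlisted products are zero. A derivation is a linear $d$ with $d([x,y])=[d(x),y]+[x,d(y)]$; an anti-derivation is a linear $D$ with $D([x,y])=[D(x),y]-[D(y),x]$; a biderivation is a pair $(d,D)$ of a derivation and an anti-derivation with $[x,d(y)]=[x,D(y)]$ for all $x,y$. For $x\in R$, $\mathrm{ad}_x(y)=[y,x]$ and $\mathrm{Ad}_x(y)=[x,y]$; the biderivation $(-\mathrm{ad}_x,\mathrm{Ad}_x)$ is called inner. *)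

theory Defs
  imports Complex_Main
begin

text \<open>Elements of R are coordinate vectors x :: nat => complex supported on {0..n};
 coordinate 0 is the coefficient of h, coordinate i (1 <= i <= n) that of e_i.\<close>

definition carrierR :: "nat \<Rightarrow> (nat \<Rightarrow> complex) set" where
  "carrierR n = {x. \<forall>k>n. x k = 0}"

definition unitv :: "nat \<Rightarrow> nat \<Rightarrow> complex" where
  "unitv i = (\<lambda>k. if k = i then 1 else 0)"

definition vadd :: "(nat \<Rightarrow> complex) \<Rightarrow> (nat \<Rightarrow> complex) \<Rightarrow> nat \<Rightarrow> complex" where
  "vadd x y = (\<lambda>k. x k + y k)"

definition vscale :: "complex \<Rightarrow> (nat \<Rightarrow> complex) \<Rightarrow> nat \<Rightarrow> complex" where
  "vscale c x = (\<lambda>k. c * x k)"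

definition basis_prod :: "nat \<Rightarrow> nat \<Rightarrow> nat \<Rightarrow> nat \<Rightarrow> complex" where
  "basis_prod n i j =
    (if 1 \<le> i \<and> i \<le> n - 1 \<and> j = 1 then unitv (i + 1)
     else if i = 0 \<and> j = 1 then vscale (-1) (unitv 1)
     else if 1 \<le> i \<and> i \<le> n \<and> j = 0 then vscale (of_nat i) (unitv i)
     else (\<lambda>_. 0))"

definition brR :: "nat \<Rightarrow> (nat \<Rightarrow> complex) \<Rightarrow> (nat \<Rightarrow> complex) \<Rightarrow> nat \<Rightarrow> complex" where
  "brR n x y = (\<lambda>k. \<Sum>i\<in>{0..n}. \<Sum>j\<in>{0..n}. x i * y j * basis_prod n i j k)"

definition linear_onR :: "nat \<Rightarrow> ((nat \<Rightarrow> complex) \<Rightarrow> nat \<Rightarrow> complex) \<Rightarrow> bool" where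
  "linear_onR n f \<longleftrightarrow>
     (\<forall>x\<in>carrierR n. f x \<in> carrierR n) \<and>
     (\<forall>x\<in>carrierR n. \<forall>y\<in>carrierR n. f (vadd x y) = vadd (f x) (f y)) \<and>
     (\<forall>c. \<forall>x\<in>carrierR n. f (vscale c x) = vscale c (f x))"

definition is_derivation :: "nat \<Rightarrow> ((nat \<Rightarrow> complex) \<Rightarrow> nat \<Rightarrow> complex) \<Rightarrow> bool" where
  "is_derivation n d \<longleftrightarrow> linear_onR n d \<and>
     (\<forall>x\<in>carrierR n. \<forall>y\<in>carrierR n. d (brR n x y) = vadd (brR n (d x) y) (brR n x (d y)))"

definition is_antiderivation :: "nat \<Rightarrow> ((nat \<Rightarrow> complex) \<Rightarrow> nat \<Rightarrow> complex) \<Rightarrow> bool" where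
  "is_antiderivation n D \<longleftrightarrow> linear_onR n D \<and>
     (\<forall>x\<in>carrierR n. \<forall>y\<in>carrierR n.
        D (brR n x y) = vadd (brR n (D x) y) (vscale (-1) (brR n (D y) x)))"

definition is_biderivation :: "nat \<Rightarrow> ((nat \<Rightarrow> complex) \<Rightarrow> nat \<Rightarrow> complex) \<Rightarrow>
    ((nat \<Rightarrow> complex) \<Rightarrow> nat \<Rightarrow> complex) \<Rightarrow> bool" where
  "is_biderivation n d D \<longleftrightarrow> is_derivation n d \<and> is_antiderivation n D \<and>
     (\<forall>x\<in>carrierR n. \<forall>y\<in>carrierR n. brR n x (d y) = brR n x (D y))"

text \<open>ad_x(y) = [y,x], Ad_x(y) = [x,y]; inner biderivation (-ad_x, Ad_x).\<close>
definition is_inner_biderivation :: "nat \<Rightarrow> ((nat \<Rightarrow> complex) \<Rightarrow> nat \<Rightarrow> complex) \<Rightarrow>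
    ((nat \<Rightarrow> complex) \<Rightarrow> nat \<Rightarrow> complex) \<Rightarrow> bool" where
  "is_inner_biderivation n d D \<longleftrightarrow>
     (\<exists>x\<in>carrierR n. \<forall>y\<in>carrierR n.
        d y = vscale (-1) (brR n y x) \<and> D y = brR n x y)"

end

theory Submission
  imports Defs
begin


lemma br:
  assumes n2: "2 \<le> n"
  shows "brR n x y k = (if k = 1 then x 1 * y 0 - x 0 * y 1
     else if 2 \<le> k \<and> k \<le> n then x (k-1) * y 1 + of_nat k * x k * y 0 else 0)"
proof -
  have bp0: "\<And>i. basis_prod n i 0 k = (if 1 \<le> i \<and> i \<le> n \<and> k = i then of_nat i else 0)"
    by (auto simp: basis_prod_def unitv_def vscale_def)
  have bp1: "\<And>i. basis_prod n i 1 k = (if i = 0 \<and> k = 1 then -1 else if 1 \<le> i \<and> i+1 \<le> n \<and> k = i+1 then 1 else 0)"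
    using n2 by (auto simp: basis_prod_def unitv_def vscale_def)
  have bpj: "\<And>i j. j \<ge> 2 \<Longrightarrow> basis_prod n i j k = 0"
    by (auto simp: basis_prod_def unitv_def vscale_def)
  have split: "{0..n} = {0,1} \<union> {2..n}" using n2 by auto
  have inner: "\<And>i. (\<Sum>j\<in>{0..n}. x i * y j * basis_prod n i j k) = x i * y 0 * basis_prod n i 0 k + x i * y 1 * basis_prod n i 1 k"
  proof -
    fix i
    have "(\<Sum>j\<in>{0..n}. x i * y j * basis_prod n i j k) = (\<Sum>j\<in>{0,1}. x i * y j * basis_prod n i j k) + (\<Sum>j\<in>{2..n}. x i * y j * basis_prod n i j k)"
      unfolding split by (rule sum.union_disjoint) auto
    also have "(\<Sum>j\<in>{2..n}. x i * y j * basis_prod n i j k) = 0" by (simp add: bpj)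
    finally show "?thesis i" by simp
  qed
  have "brR n x y k = (\<Sum>i\<in>{0..n}. x i * y 0 * basis_prod n i 0 k) + (\<Sum>i\<in>{0..n}. x i * y 1 * basis_prod n i 1 k)"
    unfolding brR_def by (simp add: inner sum.distrib)
  also have "(\<Sum>i\<in>{0..n}. x i * y 0 * basis_prod n i 0 k) = (\<Sum>i\<in>{0..n}. if i = k then (if 1 \<le> k \<and> k \<le> n then of_nat k * x k * y 0 else 0) else 0)"
    by (rule sum.cong) (auto simp: bp0)
  also have "\<dots> = (if 1 \<le> k \<and> k \<le> n then of_nat k * x k * y 0 else 0)"
    by (simp add: sum.delta)
  also have "(\<Sum>i\<in>{0..n}. x i * y 1 * basis_prod n i 1 k) = (\<Sum>i\<in>{0..n}. (if i = 0 then (if k = 1 then - x 0 * y 1 else 0) else 0) + (if i = k - 1 then (if 2 \<le> k \<and> k \<le> n then x (k-1) * y 1 else 0) else 0))"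
    by (rule sum.cong[OF refl], subst bp1, auto)
  also have "\<dots> = (if k = 1 then - x 0 * y 1 else 0) + (if 2 \<le> k \<and> k \<le> n then x (k-1) * y 1 else 0)"
    by (simp add: sum.distrib sum.delta) linarith
  finally show ?thesis using n2 by auto
qed

lemma unitv_ap: "unitv i k = (if k = i then 1 else 0)" by (simp add: unitv_def)

lemma br_u1r: "2 \<le> n \<Longrightarrow> brR n X (unitv 1) k = (if k = 1 then - X 0 else if 2 \<le> k \<and> k \<le> n then X (k-1) else 0)"
  by (simp add: br unitv_ap)
lemma br_u1r': "2 \<le> n \<Longrightarrow> brR n X (unitv (Suc 0)) k = (if k = 1 then - X 0 else if 2 \<le> k \<and> k \<le> n then X (k-1) else 0)"
  using br_u1r by simp
lemma br_u0r: "2 \<le> n \<Longrightarrow> brR n X (unitv 0) k = (if 1 \<le> k \<and> k \<le> n then of_nat k * X k else 0)"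
  by (auto simp: br unitv_ap)
lemma br_u0l: "2 \<le> n \<Longrightarrow> brR n (unitv 0) Y k = (if k = 1 then - Y 1 else 0)"
  by (auto simp: br unitv_ap)
lemma br_uil: "2 \<le> n \<Longrightarrow> 1 \<le> i \<Longrightarrow> brR n (unitv i) Y k = (if k = 1 then (if i = 1 then Y 0 else 0)
   else if 2 \<le> k \<and> k \<le> n then (if k - 1 = i then Y 1 else 0) + (if k = i then of_nat k * Y 0 else 0) else 0)"
  by (auto simp: br unitv_ap)
lemma br_uir: "2 \<le> n \<Longrightarrow> 2 \<le> i \<Longrightarrow> brR n X (unitv i) k = 0"
  by (auto simp: br unitv_ap)



lemma unitv_car: "i \<le> n \<Longrightarrow> unitv i \<in> carrierR n"
  by (auto simp: carrierR_def unitv_def)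

lemma lin_expand:
  assumes L: "linear_onR n f" and y: "y \<in> carrierR n"
  shows "f y k = (\<Sum>i\<in>{0..n}. y i * f (unitv i) k)"
proof -
  define tr where "tr m = (\<lambda>k. if k \<le> m then y k else (0::complex))" for m
  have add: "\<And>a b. a \<in> carrierR n \<Longrightarrow> b \<in> carrierR n \<Longrightarrow> f (vadd a b) = vadd (f a) (f b)"
    and sc: "\<And>c a. a \<in> carrierR n \<Longrightarrow> f (vscale c a) = vscale c (f a)"
    using L by (auto simp: linear_onR_def)
  have "m \<le> n \<Longrightarrow> f (tr m) = (\<lambda>k. \<Sum>i\<in>{0..m}. y i * f (unitv i) k)" for m
  proof (induction m)
    case 0
    have "tr 0 = vscale (y 0) (unitv 0)" by (auto simp: tr_def vscale_def unitv_def)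
    then show ?case using sc[OF unitv_car[of 0 n]] by (simp add: vscale_def)
  next
    case (Suc m)
    have "tr (Suc m) = vadd (tr m) (vscale (y (Suc m)) (unitv (Suc m)))"
      by (rule ext) (auto simp: tr_def vadd_def vscale_def unitv_def le_Suc_eq)
    moreover have "tr m \<in> carrierR n" using Suc.prems by (auto simp: tr_def carrierR_def)
    moreover have "vscale (y (Suc m)) (unitv (Suc m)) \<in> carrierR n"
      using Suc.prems by (auto simp: carrierR_def vscale_def unitv_def)
    ultimately show ?case using Suc add sc[OF unitv_car[OF Suc.prems]]
      by (simp add: vadd_def vscale_def)
  qed
  moreover have "tr n = y" using y by (auto simp: tr_def carrierR_def)
  ultimately show ?thesis by (metis order_refl)
qed

lemma br_left: "brR n y x k = (\<Sum>i\<in>{0..n}. y i * brR n (unitv i) x k)"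
proof -
  have "brR n (unitv i) x k = (\<Sum>j\<in>{0..n}. x j * basis_prod n i j k)" if "i \<le> n" for i
  proof -
    have "brR n (unitv i) x k = (\<Sum>i'\<in>{0..n}. if i' = i then (\<Sum>j\<in>{0..n}. x j * basis_prod n i j k) else 0)"
      unfolding brR_def by (rule sum.cong) (auto simp: unitv_def)
    then show ?thesis using that by (simp add: sum.delta')
  qed
  then have "(\<Sum>i\<in>{0..n}. y i * brR n (unitv i) x k) = (\<Sum>i\<in>{0..n}. y i * (\<Sum>j\<in>{0..n}. x j * basis_prod n i j k))"
    by (intro sum.cong) auto
  also have "\<dots> = brR n y x k" unfolding brR_def
    by (simp add: sum_distrib_left mult.assoc)
  finally show ?thesis by simp
qed

lemma br_right: "brR n x y k = (\<Sum>j\<in>{0..n}. y j * brR n x (unitv j) k)"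
proof -
  have "brR n x (unitv j) k = (\<Sum>i\<in>{0..n}. x i * basis_prod n i j k)" if "j \<le> n" for j
  proof -
    have "brR n x (unitv j) k = (\<Sum>i\<in>{0..n}. (\<Sum>j'\<in>{0..n}. if j' = j then x i * basis_prod n i j k else 0))"
      unfolding brR_def by (intro sum.cong) (auto simp: unitv_def)
    then show ?thesis using that by (simp add: sum.delta')
  qed
  then have "(\<Sum>j\<in>{0..n}. y j * brR n x (unitv j) k) = (\<Sum>j\<in>{0..n}. y j * (\<Sum>i\<in>{0..n}. x i * basis_prod n i j k))"
    by (intro sum.cong) auto
  also have "\<dots> = brR n x y k" unfolding brR_def
    by (subst sum.swap) (simp add: sum_distrib_left mult_ac)
  finally show ?thesis by simp
qed



theorem mainTheorem9:
  fixes n :: nat and d D :: "(nat \<Rightarrow> complex) \<Rightarrow> nat \<Rightarrow> complex"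
  assumes "n \<ge> 2"
    and "is_biderivation n d D"
  shows "is_inner_biderivation n d D"
proof -
  note n2 = assms(1)
  have Ld: "linear_onR n d" and LD: "linear_onR n D"
    and dbr: "\<And>x y. x \<in> carrierR n \<Longrightarrow> y \<in> carrierR n \<Longrightarrow> d (brR n x y) = vadd (brR n (d x) y) (brR n x (d y))"
    and Dbr: "\<And>x y. x \<in> carrierR n \<Longrightarrow> y \<in> carrierR n \<Longrightarrow> D (brR n x y) = vadd (brR n (D x) y) (vscale (-1) (brR n (D y) x))"
    and bi: "\<And>x y. x \<in> carrierR n \<Longrightarrow> y \<in> carrierR n \<Longrightarrow> brR n x (d y) = brR n x (D y)"
    using assms(2) by (auto simp: is_biderivation_def is_derivation_def is_antiderivation_def)
  have dsc: "\<And>c a. a \<in> carrierR n \<Longrightarrow> d (vscale c a) = vscale c (d a)"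
    and Dsc: "\<And>c a. a \<in> carrierR n \<Longrightarrow> D (vscale c a) = vscale c (D a)"
    using Ld LD by (auto simp: linear_onR_def)
  have dcar: "\<And>i k. i \<le> n \<Longrightarrow> n < k \<Longrightarrow> d (unitv i) k = 0"
    and Dcar: "\<And>i k. i \<le> n \<Longrightarrow> n < k \<Longrightarrow> D (unitv i) k = 0"
    using Ld LD unitv_car by (auto simp: linear_onR_def carrierR_def)
  have u0: "unitv 0 \<in> carrierR n" and u1: "unitv 1 \<in> carrierR n" using n2 by (auto intro: unitv_car)
  define a1 where "a1 = d (unitv 0) 1"
  define c1 where "c1 = d (unitv 1) 1"
  let ?h = "d (unitv 0)" and ?e = "d (unitv 1)" and ?H = "D (unitv 0)" and ?E = "D (unitv 1)"
  have b00: "brR n (unitv 0) (unitv 0) = vscale 0 (unitv 0)"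
    using n2 by (auto simp: br vscale_def unitv_ap)
  have H0: "vscale 0 ?h = vadd (brR n ?h (unitv 0)) (brR n (unitv 0) ?h)"
    using dbr[OF u0 u0] dsc[OF u0] b00 by simp
  have dh: "?h k = (if k = 1 then a1 else 0)" if "k \<le> n" "k \<noteq> 0" for k
  proof (cases "k = 1")
    case False
    with that have "2 \<le> k" by auto
    from fun_cong[OF H0, of k] this that show ?thesis using False
      by (simp add: br n2 vadd_def vscale_def unitv_ap)
  qed (simp add: a1_def)
  have b01: "brR n (unitv 0) (unitv 1) = vscale (-1) (unitv 1)"
    using n2 by (auto simp: br vscale_def unitv_ap)
  have H1: "vscale (-1) ?e = vadd (brR n ?h (unitv 1)) (brR n (unitv 0) ?e)"
    using dbr[OF u0 u1] dsc[OF u1] b01 by simp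
  have H1c: "\<And>k. vscale (-1) ?e k = vadd (brR n ?h (unitv 1)) (brR n (unitv 0) ?e) k"
    using H1 by simp
  have de10: "?e 0 = 0" using H1c[of 0] n2 by (simp add: br vadd_def vscale_def unitv_ap)
  have dh0: "?h 0 = 0" using H1c[of 1] n2 by (simp add: br vadd_def vscale_def unitv_ap)
  have de1k: "?e k = - ?h (k-1)" if "2 \<le> k" "k \<le> n" for k
    using H1c[of k] that by (simp add: br n2 vadd_def vscale_def unitv_ap) (metis minus_equation_iff)
  have bi1: "brR n (unitv i) (unitv 1) = unitv (i+1)" if "1 \<le> i" "i+1 \<le> n" for i
    using n2 that by (intro ext) (auto simp: br unitv_ap)
  have H2: "d (unitv (i+1)) k = vadd (brR n (d (unitv i)) (unitv 1)) (brR n (unitv i) ?e) k"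
    if "1 \<le> i" "i+1 \<le> n" for i k
    using dbr[OF unitv_car[of i n] u1] bi1[OF that] that by simp
  have Cd: "d (unitv (m+1)) k = (if k = m+1 then of_nat (m+1) * c1 else if k = m+2 then -a1 else 0)"
    if "m+1 \<le> n" "k \<le> n" for m k
    using that
  proof (induction m arbitrary: k)
    case 0
    show ?case
    proof (cases "k \<ge> 2")
      case True
      then show ?thesis using de1k[of k] dh[of "k-1"] 0 by auto
    next
      case False
      then have "k = 0 \<or> k = 1" by auto
      then show ?thesis using de10 by (auto simp: c1_def)
    qed
  next
    case (Suc m)
    have IH0: "d (unitv (m+1)) 0 = 0" using Suc.IH[of 0] Suc.prems by simp
    have e: "d (unitv (Suc m + 1)) k = vadd (brR n (d (unitv (m+1))) (unitv 1)) (brR n (unitv (m+1)) ?e) k"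
      using H2[of "m+1" k] Suc.prems by simp
    show ?case
    proof (cases "k \<ge> 2")
      case True
      then show ?thesis using e Suc.IH[of "k-1"] Suc.prems de10
        by (auto simp: br_u1r br_u1r' br_uil n2 vadd_def c1_def algebra_simps)
    next
      case False
      then have "k = 0 \<or> k = 1" by auto
      then show ?thesis using e IH0 de10 by (auto simp: br_u1r br_u1r' br_uil n2 vadd_def)
    qed
  qed
  have A1: "vscale (-1) ?E k = vadd (brR n ?H (unitv 1)) (vscale (-1) (brR n ?E (unitv 0))) k" for k
    using Dbr[OF u0 u1] Dsc[OF u1] b01 by simp
  have DE0: "?E 0 = 0" using A1[of 0] n2 by (simp add: br_u1r br_u1r' br_u0r vadd_def vscale_def)
  have DH0: "?H 0 = 0" using A1[of 1] n2 by (simp add: br_u1r br_u1r' br_u0r vadd_def vscale_def)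
  have DEk: "of_nat (k-1) * ?E k = ?H (k-1)" if "2 \<le> k" "k \<le> n" for k
  proof -
    have "- ?E k = ?H (k-1) - of_nat k * ?E k" using A1[of k] that n2 by (simp add: br_u1r br_u1r' br_u0r vadd_def vscale_def)
    moreover have "of_nat k = of_nat (k-1) + (1::complex)" using that by (simp add: of_nat_diff)
    ultimately show ?thesis by (simp add: algebra_simps)
  qed
  have CD: "D (unitv (m+2)) k = 0" if "m+2 \<le> n" for m k
    using that
  proof (induction m arbitrary: k)
    case 0
    have "D (unitv 2) k = vadd (brR n ?E (unitv 1)) (vscale (-1) (brR n ?E (unitv 1))) k"
      using Dbr[OF u1 u1] bi1[of 1] n2 by (simp add: numeral_2_eq_2)
    then show ?case by (simp add: vadd_def vscale_def numeral_2_eq_2)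
  next
    case (Suc m)
    have "D (unitv (m+3)) k = vadd (brR n (D (unitv (m+2))) (unitv 1)) (vscale (-1) (brR n ?E (unitv (m+2)))) k"
      using Dbr[OF unitv_car[of "m+2" n] u1] bi1[of "m+2"] Suc.prems by (simp add: numeral_3_eq_3)
    then show ?case using Suc.IH Suc.prems n2 by (simp add: vadd_def vscale_def br_u1r br_u1r' br_uir numeral_3_eq_3)
  qed
  have DH1: "?H 1 = a1" using fun_cong[OF bi[OF u0 u0], of 1] n2 by (simp add: br_u0l a1_def)
  have DE1: "?E 1 = c1" using fun_cong[OF bi[OF u0 u1], of 1] n2 by (simp add: br_u0l c1_def)
  define x where "x = (\<lambda>k. if k = 0 then - c1 else if k \<le> n then ?H k / of_nat k else 0)"
  have xc: "x \<in> carrierR n" by (auto simp: x_def carrierR_def)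
  have dE: "d (unitv i) k = - brR n (unitv i) x k" and DE: "D (unitv i) k = brR n x (unitv i) k"
    if "i \<le> n" for i k
  proof -
    consider "i = 0" | "i = 1" | "2 \<le> i" by linarith
    then have "d (unitv i) k = - brR n (unitv i) x k \<and> D (unitv i) k = brR n x (unitv i) k"
    proof cases
      case 1
      consider "k = 0" | "k = 1" | "2 \<le> k \<and> k \<le> n" | "n < k" by linarith
      then show ?thesis
      proof cases
        case 1 then show ?thesis using \<open>i = 0\<close> dh0 DH0 n2 by (simp add: br_u0l br_u0r)
      next
        case 2 then show ?thesis using \<open>i = 0\<close> dh[of 1] DH1 n2 by (simp add: br_u0l br_u0r x_def)
      next
        case 3 then show ?thesis using \<open>i = 0\<close> dh[of k] n2 by (simp add: br_u0l br_u0r x_def)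
      next
        case 4 then show ?thesis using \<open>i = 0\<close> dcar[of 0 k] Dcar[of 0 k] n2 by (simp add: br_u0l br_u0r)
      qed
    next
      case 2
      consider "k = 0" | "k = 1" | "2 \<le> k \<and> k \<le> n" | "n < k" by linarith
      then show ?thesis
      proof cases
        case 1 then show ?thesis using \<open>i = 1\<close> de10 DE0 n2 by (simp add: br_uil br_u1r br_u1r')
      next
        case 2 then show ?thesis using \<open>i = 1\<close> DE1 n2 by (simp add: br_uil br_u1r br_u1r' x_def c1_def)
      next
        case 3
        have "D (unitv 1) k = D (unitv 0) (k-1) / of_nat (k-1)"
          using DEk[of k] 3 by (simp add: field_simps)
        then show ?thesis using \<open>i = 1\<close> Cd[of 0 k] 3 n2 DH1
          by (auto simp: br_uil br_u1r br_u1r' x_def)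
      next
        case 4 then show ?thesis using \<open>i = 1\<close> dcar[of 1 k] Dcar[of 1 k] n2 by (simp add: br_uil br_u1r br_u1r')
      qed
    next
      case 3
      obtain m where m: "i = m + 2" using 3 le_Suc_ex by (metis add.commute)
      have Di: "D (unitv i) k = 0" using CD[of m k] m that by simp
      consider "k = 0" | "k = 1" | "2 \<le> k \<and> k \<le> n" | "n < k" by linarith
      then show ?thesis
      proof cases
        case 1 then show ?thesis using 3 Cd[of "i-1" k] that Di n2 by (simp add: br_uil br_uir)
      next
        case 2 then show ?thesis using 3 Cd[of "i-1" k] that Di n2 by (simp add: br_uil br_uir)
      next
        case 4 then show ?thesis using 3 dcar[of i k] that Di n2 by (simp add: br_uil br_uir)
      next
        case 5: 3
        then show ?thesis using 3 Cd[of "i-1" k] that Di n2 DH1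
          by (auto simp: br_uil br_uir x_def c1_def)
      qed
    qed
    then show "d (unitv i) k = - brR n (unitv i) x k" "D (unitv i) k = brR n x (unitv i) k" by auto
  qed
  show ?thesis unfolding is_inner_biderivation_def
  proof (intro bexI[OF _ xc] ballI conjI)
    fix y assume y: "y \<in> carrierR n"
    show "d y = vscale (-1) (brR n y x)"
    proof
      fix k
      have "d y k = (\<Sum>i\<in>{0..n}. y i * (- brR n (unitv i) x k))"
        using lin_expand[OF Ld y] dE by simp
      also have "\<dots> = vscale (-1) (brR n y x) k"
        by (simp add: vscale_def br_left[of n y x] sum_negf)
      finally show "d y k = vscale (-1) (brR n y x) k" .
    qed
    show "D y = brR n x y"
    proof
      fix k
      have "D y k = (\<Sum>i\<in>{0..n}. y i * brR n x (unitv i) k)"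
        using lin_expand[OF LD y] DE by simp
      also have "\<dots> = brR n x y k"
        by (simp add: br_right[of n x y])
      finally show "D y k = brR n x y k" .
    qed
  qed
qed

end
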